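(* In the Box-iLQR backward pass, let the feedback gain be $\mathbf{K}_t=-(Q_{\mathbf{uu}}+\zeta\mathbf{I})^{-1}Q_{\mathbf{ux}}$ with $Q_{\mathbf{uu}}=C_{\mathbf{uu}}+\boldsymbol{\omega}_{\mathbf{uu}}+\mathbf{F}_{\mathbf{u}}^\top\mathbf{S}_{t+1}\mathbf{F}_{\mathbf{u}}$ and $Q_{\mathbf{ux}}=C_{\mathbf{ux}}+\mathbf{F}_{\mathbf{u}}^\top\mathbf{S}_{t+1}\mathbf{F}_{\mathbf{x}}$, and consider the feedback law $\mathbf{u}_t=\mathbf{u}_t^*+\mathbf{K}_t^*(\mathbf{x}_t-\mathbf{x}_t^* )$ built from the optimal trajectory $(\mathbf{x}^*,\mathbf{u}^* )$ and the gains $\mathbf{K}_t^*$ at that trajectory. This feedback controller inherently respects the control saturation limits $\underline{u}_j\le u_{t,j}\le\bar{u}_j$ ($j\in\mathcal{I}_u$): specifically, if an optimal control input $u_{t,j}$ is saturated at its boundary (i.e. approaches $\underline{u}_j$ or $\bar{u}_j$), then the corresponding ($j$-th) row of the feedback matrix $\mathbf{K}_t$ is the zero vector.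
   Context: Setting: discrete-time dynamics $\mathbf{x}_{t+1}=\mathbf{F}(\mathbf{x}_t,\mathbf{u}_t)$, $\mathbf{x}_t\in\mathbb{R}^n$, $\mathbf{u}_t\in\mathbb{R}^m$, stage cost $C$, with box constraints on control components $j\in\mathcal{I}_u$ handled by the log-barrier $-\sum_{j\in\mathcal{I}_u}\sigma_j(\log(u_j-\underline{u}_j)+\log(\bar{u}_j-u_j))$ (and analogous state barriers with parameters $\mu_i$), $\sigma_j>0$. Thus $\boldsymbol{\omega}_{\mathbf{uu}}$ is diagonal with $(\boldsymbol{\omega}_{\mathbf{uu}})_{jj}=\sigma_j\big(\frac{1}{(u_{t,j}-\underline{u}_j)^2}+\frac{1}{(\bar{u}_j-u_{t,j})^2}\big)$ for $j\in\mathcal{I}_u$ and zero otherwise. $\mathbf{S}_{t+1}$ is the value-function Hessian from the iLQR Riccati recursion ($\mathbf{S}_T=\Phi_{\mathbf{xx}}+\boldsymbol{\Omega}_{\mathbf{xx}}$, $\mathbf{S}_t=Q_{\mathbf{xx}}+\mathbf{K}_t^\top Q_{\mathbf{uu}}\mathbf{K}_t+\mathbf{K}_t^\top Q_{\mathbf{ux}}+Q_{\mathbf{ux}}^\top\mathbf{K}_t$, $Q_{\mathbf{xx}}=C_{\mathbf{xx}}+\boldsymbol{\omega}_{\mathbf{xx}}+\mathbf{F}_{\mathbf{x}}^\top\mathbf{S}_{t+1}\mathbf{F}_{\mathbf{x}}$), $\zeta\ge0$ is a regularization constant, and all derivatives are evaluated at the current trajectory. "Saturated" is understood in the limiting sense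 that the distance of $u_{t,j}$ to a bound tends to zero, so $(\boldsymbol{\omega}_{\mathbf{uu}})_{jj}\to\infty$. *)

theory Defs
  imports "HOL-Analysis.Analysis"
begin

definition omega_uu :: "('m \<Rightarrow> real) \<Rightarrow> 'm set \<Rightarrow> ('m \<Rightarrow> real) \<Rightarrow> ('m \<Rightarrow> real)
    \<Rightarrow> real^'m \<Rightarrow> real^'m^'m" where
  "omega_uu \<sigma> Iu lo hi u =
     (\<chi> i k. if i = k \<and> i \<in> Iu
              then \<sigma> i * (1 / (u$i - lo i)^2 + 1 / (hi i - u$i)^2) else 0)"

definition Q_uu :: "real^'m^'m \<Rightarrow> real^'m^'m \<Rightarrow> real^'m^'n \<Rightarrow> real^'n^'n \<Rightarrow> real^'m^'m" where
  "Q_uu Cuu Wuu Fu S = Cuu + Wuu + transpose Fu ** S ** Fu"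

definition Q_ux :: "real^'n^'m \<Rightarrow> real^'m^'n \<Rightarrow> real^'n^'n \<Rightarrow> real^'n^'n \<Rightarrow> real^'n^'m" where
  "Q_ux Cux Fu S Fx = Cux + transpose Fu ** S ** Fx"

definition gain :: "real^'m^'m \<Rightarrow> real \<Rightarrow> real^'n^'m \<Rightarrow> real^'n^'m" where
  "gain Quu \<zeta> Qux = - (matrix_inv (Quu + \<zeta> *\<^sub>R mat 1) ** Qux)"

definition pos_def :: "real^'m^'m \<Rightarrow> bool" where
  "pos_def M \<longleftrightarrow> (\<forall>x. x \<noteq> 0 \<longrightarrow> x \<bullet> (M *v x) > 0)"

definition upd_comp :: "real^'m \<Rightarrow> 'm \<Rightarrow> real \<Rightarrow> real^'m" where
  "upd_comp u j v = (\<chi> i. if i = j then v else u $ i)"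

end

theory Submission
  imports Defs "HOL-Real_Asymp.Real_Asymp"
begin

definition Ej :: "'m \<Rightarrow> real^'m^'m" where
  "Ej j = (\<chi> i k. if i = j \<and> k = j then 1 else 0)"

lemma Ej_mult: "Ej j *v x = axis j (x $ j)"
  by (auto simp: Ej_def vec_eq_iff matrix_vector_mult_def axis_def if_distrib[of "\<lambda>a. a * _"] cong: if_cong)

lemma quad_pert: "x \<bullet> ((B + t *\<^sub>R Ej j) *v x) = x \<bullet> (B *v x) + t * (x $ j)^2"
proof -
  have "(B + t *\<^sub>R Ej j) *v x = B *v x + t *\<^sub>R (Ej j *v x)"
    by (simp add: algebra_simps scaleR_matrix_vector_assoc)
  then show ?thesis by (simp add: Ej_mult inner_add_right inner_axis power2_eq_square)
qed

lemma row_mult: "((X::real^_^_) ** Q) $ j = transpose Q *v (X $ j)"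
  by (auto simp: vec_eq_iff matrix_matrix_mult_def matrix_vector_mult_def transpose_def intro!: sum.cong)

lemma transp_inner: "(x::real^'m) \<bullet> (transpose A *v x) = x \<bullet> (A *v x)"
  by (metis transpose_matrix_vector dot_lmul_matrix inner_commute)

lemma pd_bound:
  fixes B :: "real^'m^'m"
  assumes "pos_def B"
  shows "\<exists>c>0. \<forall>x. c * (norm x)^2 \<le> x \<bullet> (B *v x)"
proof -
  let ?f = "\<lambda>x::real^'m. x \<bullet> (B *v x)"
  have ne: "sphere (0::real^'m) 1 \<noteq> {}"
    by (metis empty_iff mem_sphere_0 norm_axis_1)
  have cont: "continuous_on (sphere 0 1) ?f"
    by (intro continuous_intros)
  obtain x0 where x0: "x0 \<in> sphere 0 1" "\<And>y. y \<in> sphere 0 1 \<Longrightarrow> ?f x0 \<le> ?f y"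
    using continuous_attains_inf[OF compact_sphere ne cont] by blast
  have "x0 \<noteq> 0" using x0(1) by auto
  then have cpos: "?f x0 > 0" using assms unfolding pos_def_def by blast
  have "?f x0 * (norm x)^2 \<le> ?f x" for x
  proof (cases "x = 0")
    case True then show ?thesis by simp
  next
    case False
    define u where "u = (1 / norm x) *\<^sub>R x"
    have "u \<in> sphere 0 1" using False by (simp add: u_def)
    then have le: "?f x0 \<le> ?f u" using x0(2) by blast
    have xu: "x = norm x *\<^sub>R u" using False by (simp add: u_def)
    have "?f x = (norm x)^2 * ?f u"
      by (subst xu, subst xu) (simp add: matrix_vector_mult_scaleR power2_eq_square)
    then show ?thesis using mult_right_mono[OF le, of "(norm x)^2"] by (simp add: mult.commute)
  qed
  then show ?thesis using cpos by blast
qed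

lemma core:
  fixes B :: "real^'m^'m"
  assumes c: "c > 0" and hB: "\<forall>x. c * (norm x)^2 \<le> x \<bullet> (B *v x)" and t: "t > 0"
  shows "invertible (B + t *\<^sub>R Ej j) \<and>
         (norm (matrix_inv (B + t *\<^sub>R Ej j) $ j))^2 \<le> 1 / (4 * c * t)"
proof -
  define A where "A = B + t *\<^sub>R Ej j"
  have qA: "x \<bullet> (A *v x) \<ge> c * (norm x)^2 + t * (x $ j)^2" for x
    using hB quad_pert[of x B t j] unfolding A_def by auto
  have "\<forall>x. A *v x = 0 \<longrightarrow> x = 0"
  proof (intro allI impI)
    fix x assume "A *v x = 0"
    then have "c * (norm x)^2 + t * (x $ j)^2 \<le> 0" using qA[of x] by simp
    moreover have "t * (x $ j)^2 \<ge> 0" using t by simp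
    ultimately have "c * (norm x)^2 \<le> 0" by linarith
    then show "x = 0" using c by (simp add: mult_le_0_iff)
  qed
  then have inv: "invertible A"
    using matrix_left_invertible_ker invertible_left_inverse by blast
  then have li: "matrix_inv A ** A = mat 1"
    unfolding invertible_def matrix_inv_def by (rule someI2_ex) auto
  define y where "y = matrix_inv A $ j"
  have "transpose A *v y = axis j 1"
    using arg_cong[OF li, of "\<lambda>M. M $ j"] unfolding y_def row_mult
    by (simp add: vec_eq_iff mat_def axis_def)
  then have "y \<bullet> (A *v y) = y $ j"
    using transp_inner[of y A] by (simp add: inner_axis)
  then have h: "c * (norm y)^2 + t * (y $ j)^2 \<le> y $ j" using qA[of y] by simp
  have "0 \<le> (2 * t * y $ j - 1)^2" by simp
  then have "y $ j - t * (y $ j)^2 \<le> 1 / (4 * t)"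
    using t by (simp add: field_simps power2_eq_square)
  then have "c * (norm y)^2 \<le> 1 / (4 * t)" using h by linarith
  then have "(norm y)^2 \<le> 1 / (4 * t) / c" using c by (metis pos_le_divide_eq mult.commute)
  also have "1 / (4 * t) / c = 1 / (4 * c * t)" by simp
  finally show ?thesis using inv unfolding A_def y_def by (simp add: mult.commute)
qed

lemma row_lim:
  fixes B :: "real^'m^'m"
  assumes c: "c > 0" and hB: "\<forall>x. c * (norm x)^2 \<le> x \<bullet> (B *v x)"
    and tl: "filterlim t at_top F"
  shows "((\<lambda>v. matrix_inv (B + t v *\<^sub>R Ej j) $ j) \<longlongrightarrow> 0) F"
proof (rule Lim_null_comparison)
  show "eventually (\<lambda>v. norm (matrix_inv (B + t v *\<^sub>R Ej j) $ j)
          \<le> sqrt (inverse (4 * c) * inverse (t v))) F"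
    using eventually_gt_at_top[of 0] tl unfolding filterlim_def
  proof -
    have "eventually (\<lambda>v. t v > 0) F"
      using tl by (simp add: filterlim_at_top_dense)
    then show ?thesis
    proof (rule eventually_mono)
      fix v assume "t v > 0"
      then have "(norm (matrix_inv (B + t v *\<^sub>R Ej j) $ j))^2 \<le> inverse (4 * c) * inverse (t v)"
        using core[OF c hB, of "t v" j] by (simp add: field_simps)
      then show "norm (matrix_inv (B + t v *\<^sub>R Ej j) $ j) \<le> sqrt (inverse (4 * c) * inverse (t v))"
        using real_le_rsqrt by blast
    qed
  qed
  have "((\<lambda>v. inverse (t v)) \<longlongrightarrow> 0) F"
    using tl by (rule tendsto_inverse_0_at_top)
  then have "((\<lambda>v. inverse (4 * c) * inverse (t v)) \<longlongrightarrow> inverse (4*c) * 0) F"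
    by (intro tendsto_intros)
  then have "((\<lambda>v. sqrt (inverse (4 * c) * inverse (t v))) \<longlongrightarrow> sqrt 0) F"
    by (intro tendsto_intros) simp
  then show "((\<lambda>v. sqrt (inverse (4 * c) * inverse (t v))) \<longlongrightarrow> 0) F" by simp
qed

theorem theorem2:
  fixes Cuu :: "real^'m^'m" and Cux :: "real^'n^'m"
    and Fu :: "real^'m^'n" and Fx :: "real^'n^'n" and S :: "real^'n^'n"
    and \<zeta> :: real and \<sigma> lo hi :: "'m \<Rightarrow> real" and Iu :: "'m set"
    and u :: "real^'m" and j :: 'm
  defines "K \<equiv> (\<lambda>v. gain (Q_uu Cuu (omega_uu \<sigma> Iu lo hi (upd_comp u j v)) Fu S) \<zeta>
                         (Q_ux Cux Fu S Fx))"
  assumes "\<zeta> \<ge> 0"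
    and "\<And>i. i \<in> Iu \<Longrightarrow> \<sigma> i > 0"
    and "\<And>i. i \<in> Iu \<Longrightarrow> lo i < hi i"
    and "\<And>i. i \<in> Iu \<Longrightarrow> i \<noteq> j \<Longrightarrow> lo i < u $ i \<and> u $ i < hi i"
    and "j \<in> Iu"
    and "eventually (\<lambda>v. pos_def (Q_uu Cuu (omega_uu \<sigma> Iu lo hi (upd_comp u j v)) Fu S
                                 + \<zeta> *\<^sub>R mat 1)) (at_right (lo j))"
    and "eventually (\<lambda>v. pos_def (Q_uu Cuu (omega_uu \<sigma> Iu lo hi (upd_comp u j v)) Fu S
                                 + \<zeta> *\<^sub>R mat 1)) (at_left (hi j))"
  shows "((\<lambda>v. K v $ j) \<longlongrightarrow> 0) (at_right (lo j)) \<and>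
         ((\<lambda>v. K v $ j) \<longlongrightarrow> 0) (at_left (hi j))"
proof -
  define A where "A v = Q_uu Cuu (omega_uu \<sigma> Iu lo hi (upd_comp u j v)) Fu S + \<zeta> *\<^sub>R mat 1" for v
  define w where "w v = \<sigma> j * (1/(v - lo j)^2 + 1/(hi j - v)^2)" for v
  obtain v0 where pd: "pos_def (A v0)"
    using eventually_happens'[OF _ assms(7)] unfolding A_def by auto
  obtain c where c: "c > 0" "\<forall>x. c * (norm x)^2 \<le> x \<bullet> (A v0 *v x)"
    using pd_bound[OF pd] by blast
  have Aeq: "A v = A v0 + (w v - w v0) *\<^sub>R Ej j" for v
  proof -
    have "(A v) $ i $ k = (A v0)$i$k + (if i=j \<and> k=j then w v - w v0 else 0)" for i k
      using assms(6) by (auto simp add: A_def Q_uu_def omega_uu_def upd_comp_def w_def)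
    then show ?thesis by (simp add: vec_eq_iff Ej_def)
  qed
  have Keq: "K v $ j = - (transpose (Q_ux Cux Fu S Fx) *v (matrix_inv (A v0 + (w v - w v0) *\<^sub>R Ej j) $ j))" for v
  proof -
    have "K v $ j = - (transpose (Q_ux Cux Fu S Fx) *v (matrix_inv (A v) $ j))"
      unfolding K_def gain_def A_def by (simp add: row_mult)
    then show ?thesis using Aeq[of v] by simp
  qed
  have s: "\<sigma> j > 0" and lh: "lo j < hi j" using assms(3,4,6) by auto
  have gen: "((\<lambda>v. K v $ j) \<longlongrightarrow> 0) F" if tl: "filterlim (\<lambda>v. w v - w v0) at_top F" for F
  proof -
    have "((\<lambda>v. matrix_inv (A v0 + (w v - w v0) *\<^sub>R Ej j) $ j) \<longlongrightarrow> 0) F"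
      by (rule row_lim[OF c tl])
    then have "((\<lambda>v. transpose (Q_ux Cux Fu S Fx) *v (matrix_inv (A v0 + (w v - w v0) *\<^sub>R Ej j) $ j)) \<longlongrightarrow> 0) F"
      by (rule bounded_linear.tendsto_zero[OF matrix_vector_mul_bounded_linear])
    then have "((\<lambda>v. - (transpose (Q_ux Cux Fu S Fx) *v (matrix_inv (A v0 + (w v - w v0) *\<^sub>R Ej j) $ j))) \<longlongrightarrow> - 0) F"
      by (rule tendsto_minus)
    then show ?thesis by (simp add: Keq)
  qed
  have "filterlim (\<lambda>v. w v - w v0) at_top (at_right (lo j))"
    unfolding w_def using s lh by real_asymp
  moreover have "filterlim (\<lambda>v. w v - w v0) at_top (at_left (hi j))"
    unfolding w_def using s lh by real_asymp
  ultimately show ?thesis using gen by blast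
qed

end
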